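(* Let $\beta^{twfe}:=\mathrm{cov}(\Delta Y,D)/\mathrm{var}(D)$ and $m_\Delta(d):=\mathbb{E}[\Delta Y\mid D=d]$, under random sampling. (1) Under the Continuous Treatment condition, $$\beta^{twfe}=\int_{d_L}^{d_U}\int_{l}^{d_U}w_1^{2\times2}(l,h)\frac{m_\Delta(h)-m_\Delta(l)}{h-l}\,dh\,dl+\int_{d_L}^{d_U}w_0^{2\times2}(h)\frac{m_\Delta(h)-m_\Delta(0)}{h}\,dh,$$ where $w_1^{2\times2}(l,h):=(h-l)^2f_D(h)f_D(l)/\mathrm{var}(D)$ and $w_0^{2\times2}(h):=h^2f_D(h)\,\mathbb{P}(D=0)/\mathrm{var}(D)$; these weights are nonnegative and $\int_{d_L}^{d_U}\int_l^{d_U}w_1^{2\times2}(l,h)\,dh\,dl+\int_{d_L}^{d_U}w_0^{2\times2}(h)\,dh=1$. (Equivalently $w_1^{2\times2}(l,h)=(h-l)^2(f_D(h)+f_D(l))^2\frac{f_D(h)}{f_D(h)+f_D(l)}\frac{f_D(l)}{f_D(h)+f_D(l)}/\mathrm{var}(D)$, and analogously for $w_0^{2\times2}$ with $f_D(l)$ replaced by $\mathbb{P}(D=0)$.) (2) Under the Multi-Valued Treatment condition, $$\beta^{twfe}=\sum_{l\in\mathcal{D}}\sum_{h\in\mathcal{D},\,h>l}w^{2\times2}(l,h)\frac{m_\Delta(h)-m_\Delta(l)}{h-l},$$ where $w^{2\times2}(l,h):=(h-l)^2(p_l+p_h)^2\,p_{l|\{l,h\}}(1-p_{l|\{l,h\}})/\mathrm{var}(D)=(h-l)^2p_lp_h/\mathrm{var}(D)$,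 $p_d:=\mathbb{P}(D=d)$, $p_{l|\{l,h\}}:=\mathbb{P}(D=l\mid D\in\{l,h\})$; the weights are nonnegative and sum to one.
   Context: Two periods $t-1,t$; the data $(Y_t,Y_{t-1},D)$ are i.i.d. across units, $D\ge0$, $\Delta Y:=Y_t-Y_{t-1}$ with finite second moments, $\mathrm{var}(D)>0$. Continuous Treatment condition: support of $D$ is $\{0\}\cup[d_L,d_U]$, $0<d_L<d_U<\infty$, $\mathbb{P}(D=0)>0$, $D$ has a density $f_D>0$ on $[d_L,d_U]$, $m_\Delta$ continuously differentiable on $[d_L,d_U]$. Multi-Valued Treatment condition: support $\mathcal{D}=\{0,d_1,\dots,d_J\}$, $0<d_1<\dots<d_J$, each with positive probability. *)

theory Defs
  imports "HOL-Probability.Probability"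
begin

definition var_rv :: "'a measure \<Rightarrow> ('a \<Rightarrow> real) \<Rightarrow> real" where
  "var_rv M X = (\<integral>x. (X x - (\<integral>y. X y \<partial>M))\<^sup>2 \<partial>M)"

definition cov_rv :: "'a measure \<Rightarrow> ('a \<Rightarrow> real) \<Rightarrow> ('a \<Rightarrow> real) \<Rightarrow> real" where
  "cov_rv M X Z = (\<integral>x. (X x - (\<integral>y. X y \<partial>M)) * (Z x - (\<integral>y. Z y \<partial>M)) \<partial>M)"

definition beta_twfe :: "'a measure \<Rightarrow> ('a \<Rightarrow> real) \<Rightarrow> ('a \<Rightarrow> real) \<Rightarrow> real" where
  "beta_twfe M DY D = cov_rv M DY D / var_rv M D"

text \<open>m is a version of the conditional mean function d \<mapsto> E[DY | D = d]:
  a Borel function with m(D) integrable and E[DY 1{D\<in>A}] = E[m(D) 1{D\<in>A}] for all Borel A.\<close>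

definition is_cond_mean :: "'a measure \<Rightarrow> ('a \<Rightarrow> real) \<Rightarrow> ('a \<Rightarrow> real) \<Rightarrow> (real \<Rightarrow> real) \<Rightarrow> bool" where
  "is_cond_mean M DY D m \<longleftrightarrow>
     m \<in> borel_measurable borel \<and> integrable M (\<lambda>x. m (D x)) \<and>
     (\<forall>A \<in> sets borel. (\<integral>x. indicator A (D x) * DY x \<partial>M) = (\<integral>x. indicator A (D x) * m (D x) \<partial>M))"

end

theory Submission
  imports Defs "HOL-Probability.Probability"
begin



lemma cond_mean_mult:
  assumes P: "prob_space M" and [measurable]: "DY \<in> borel_measurable M" "D \<in> borel_measurable M"
    and iY: "integrable M DY" and iDY: "integrable M (\<lambda>x. D x * DY x)" and cm: "is_cond_mean M DY D m"
  shows "integrable M (\<lambda>x. D x * m (D x))" "(\<integral>x. D x * m (D x) \<partial>M) = (\<integral>x. D x * DY x \<partial>M)"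
proof -
  interpret prob_space M by (rule P)
  define F where "F = vimage_algebra (space M) D borel"
  have DF: "D \<in> space M \<rightarrow> space borel" by simp
  have sF: "sets F = {D -` A \<inter> space M | A. A \<in> sets borel}"
    unfolding F_def by (rule sets_vimage_algebra2[OF DF])
  have sub: "subalgebra M F"
    unfolding subalgebra_def using sF by (auto simp: F_def)
  interpret fms: finite_measure_subalgebra M F
    by unfold_locales (rule sub)
  have [measurable]: "m \<in> borel_measurable borel" and im: "integrable M (\<lambda>x. m (D x))"
    and eq: "\<And>A. A \<in> sets borel \<Longrightarrow> (\<integral>x. indicator A (D x) * DY x \<partial>M) = (\<integral>x. indicator A (D x) * m (D x) \<partial>M)"
    using cm unfolding is_cond_mean_def by auto
  have DmF: "D \<in> borel_measurable F"
    unfolding F_def by (rule measurable_vimage_algebra1[OF DF])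
  have mDF: "(\<lambda>x. m (D x)) \<in> borel_measurable F"
    using DmF by measurable
  have AE: "AE x in M. real_cond_exp M F DY x = m (D x)"
  proof (rule fms.real_cond_exp_charact[OF _ iY im mDF])
    fix A assume "A \<in> sets F"
    then obtain B where B: "B \<in> sets borel" "A = D -` B \<inter> space M" using sF by auto
    have "(\<integral>x\<in>A. DY x \<partial>M) = (\<integral>x. indicator B (D x) * DY x \<partial>M)"
      unfolding set_lebesgue_integral_def using B
      by (intro Bochner_Integration.integral_cong refl) (auto simp: indicator_def)
    also have "\<dots> = (\<integral>x. indicator B (D x) * m (D x) \<partial>M)" by (rule eq[OF B(1)])
    also have "\<dots> = (\<integral>x\<in>A. m (D x) \<partial>M)"
      unfolding set_lebesgue_integral_def using B
      by (intro Bochner_Integration.integral_cong refl) (auto simp: indicator_def)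
    finally show "(\<integral>x\<in>A. DY x \<partial>M) = (\<integral>x\<in>A. m (D x) \<partial>M)" .
  qed
  have i1: "integrable M (\<lambda>x. D x * real_cond_exp M F DY x)"
    and e1: "(\<integral>x. D x * real_cond_exp M F DY x \<partial>M) = (\<integral>x. D x * DY x \<partial>M)"
    using fms.real_cond_exp_intg[OF iDY DmF] by auto
  have AE2: "AE x in M. D x * real_cond_exp M F DY x = D x * m (D x)"
    using AE by eventually_elim simp
  have mm: "(\<lambda>x. D x * m (D x)) \<in> borel_measurable M" by measurable
  have mr: "(\<lambda>x. D x * real_cond_exp M F DY x) \<in> borel_measurable M"
    using i1 by (rule borel_measurable_integrable)
  show "integrable M (\<lambda>x. D x * m (D x))"
    by (rule integrable_cong_AE_imp[OF i1 mm AE2])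
  have "(\<integral>x. D x * real_cond_exp M F DY x \<partial>M) = (\<integral>x. D x * m (D x) \<partial>M)"
    by (rule integral_cong_AE[OF mr mm AE2])
  then show "(\<integral>x. D x * m (D x) \<partial>M) = (\<integral>x. D x * DY x \<partial>M)" using e1 by simp
qed



lemma L2_prod_integrable:
  fixes X Z :: "'a \<Rightarrow> real"
  assumes [measurable]: "X \<in> borel_measurable M" "Z \<in> borel_measurable M"
    and "integrable M (\<lambda>x. (X x)\<^sup>2)" "integrable M (\<lambda>x. (Z x)\<^sup>2)"
  shows "integrable M (\<lambda>x. X x * Z x)"
proof (rule Bochner_Integration.integrable_bound)
  show "integrable M (\<lambda>x. (X x)\<^sup>2 + (Z x)\<^sup>2)" using assms by simp
  show "(\<lambda>x. X x * Z x) \<in> borel_measurable M" by measurable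
  show "AE x in M. norm (X x * Z x) \<le> norm ((X x)\<^sup>2 + (Z x)\<^sup>2)"
  proof (intro AE_I2)
    fix x
    have "\<bar>X x * Z x\<bar> \<le> (X x)\<^sup>2 + (Z x)\<^sup>2"
    proof -
      have "2 * \<bar>X x\<bar> * \<bar>Z x\<bar> \<le> (X x)\<^sup>2 + (Z x)\<^sup>2" using sum_squares_bound[of "\<bar>X x\<bar>" "\<bar>Z x\<bar>"] by simp
      moreover have "0 \<le> \<bar>X x\<bar> * \<bar>Z x\<bar>" by simp
      ultimately have "\<bar>X x\<bar> * \<bar>Z x\<bar> \<le> (X x)\<^sup>2 + (Z x)\<^sup>2" by linarith
      then show ?thesis by (simp add: abs_mult)
    qed
    then show "norm (X x * Z x) \<le> norm ((X x)\<^sup>2 + (Z x)\<^sup>2)" by simp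
  qed
qed

lemma cov_expand:
  fixes X Z :: "'a \<Rightarrow> real"
  assumes P: "prob_space M" and iX: "integrable M X" and iZ: "integrable M Z" and iXZ: "integrable M (\<lambda>x. X x * Z x)"
  shows "cov_rv M X Z = (\<integral>x. X x * Z x \<partial>M) - (\<integral>x. X x \<partial>M) * (\<integral>x. Z x \<partial>M)"
proof -
  interpret prob_space M by (rule P)
  define a where "a = (\<integral>x. X x \<partial>M)"
  define b where "b = (\<integral>x. Z x \<partial>M)"
  have "cov_rv M X Z = (\<integral>x. (X x * Z x - b * X x) + (a * b - a * Z x) \<partial>M)"
    unfolding cov_rv_def a_def[symmetric] b_def[symmetric]
    by (intro Bochner_Integration.integral_cong refl) (simp add: algebra_simps)
  also have "\<dots> = (\<integral>x. X x * Z x - b * X x \<partial>M) + (\<integral>x. a * b - a * Z x \<partial>M)"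
    by (rule Bochner_Integration.integral_add) (use iX iZ iXZ in auto)
  also have "(\<integral>x. X x * Z x - b * X x \<partial>M) = (\<integral>x. X x * Z x \<partial>M) - b * a"
    using iX iXZ by (simp add: a_def)
  also have "(\<integral>x. a * b - a * Z x \<partial>M) = a * b - a * b"
    using iZ by (simp add: b_def prob_space)
  finally show ?thesis by (simp add: a_def b_def)
qed

lemma var_is_cov: "var_rv M X = cov_rv M X X"
  unfolding var_rv_def cov_rv_def by (simp add: power2_eq_square)

lemma moments:
  assumes P: "prob_space M" and [measurable]: "DY \<in> borel_measurable M" "D \<in> borel_measurable M"
    and Y2: "integrable M (\<lambda>x. (DY x)\<^sup>2)" and D2: "integrable M (\<lambda>x. (D x)\<^sup>2)"
  shows "integrable M DY" "integrable M D" "integrable M (\<lambda>x. D x * DY x)"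
    "var_rv M D = (\<integral>x. (D x)\<^sup>2 \<partial>M) - (\<integral>x. D x \<partial>M)\<^sup>2"
    "cov_rv M DY D = (\<integral>x. D x * DY x \<partial>M) - (\<integral>x. DY x \<partial>M) * (\<integral>x. D x \<partial>M)"
proof -
  interpret prob_space M by (rule P)
  show iY: "integrable M DY" by (rule square_integrable_imp_integrable[OF _ Y2]) simp
  show iD: "integrable M D" by (rule square_integrable_imp_integrable[OF _ D2]) simp
  show iDY: "integrable M (\<lambda>x. D x * DY x)" by (rule L2_prod_integrable) (use D2 Y2 in auto)
  have "integrable M (\<lambda>x. DY x * D x)" using iDY by (simp add: mult.commute)
  from cov_expand[OF P iY iD this]
  show "cov_rv M DY D = (\<integral>x. D x * DY x \<partial>M) - (\<integral>x. DY x \<partial>M) * (\<integral>x. D x \<partial>M)"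
    by (simp add: mult.commute)
  have "integrable M (\<lambda>x. D x * D x)" using D2 by (simp add: power2_eq_square)
  from cov_expand[OF P iD iD this]
  show "var_rv M D = (\<integral>x. (D x)\<^sup>2 \<partial>M) - (\<integral>x. D x \<partial>M)\<^sup>2"
    by (simp add: var_is_cov power2_eq_square)
qed



lemma pair_sum_half:
  fixes F :: "real \<Rightarrow> real \<Rightarrow> real"
  assumes "finite S" and sym: "\<And>l h. F l h = F h l" and diag: "\<And>l. F l l = 0"
  shows "2 * (\<Sum>l\<in>S. \<Sum>h\<in>{h\<in>S. l < h}. F l h) = (\<Sum>l\<in>S. \<Sum>h\<in>S. F l h)"
proof -
  have inner: "\<And>l. (\<Sum>h\<in>{h\<in>S. l < h}. F l h) = (\<Sum>h\<in>S. if l < h then F l h else 0)"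
    using assms(1) by (simp add: sum.inter_filter)
  have inner2: "\<And>l. (\<Sum>h\<in>S. F l h) = (\<Sum>h\<in>S. if l < h then F l h else 0) + (\<Sum>h\<in>S. if h < l then F l h else 0)"
    by (subst sum.distrib[symmetric]) (rule sum.cong, auto simp: diag)
  have sw: "(\<Sum>l\<in>S. \<Sum>h\<in>S. if h < l then F l h else 0) = (\<Sum>l\<in>S. \<Sum>h\<in>S. if l < h then F l h else 0)"
    by (subst sum.swap) (intro sum.cong refl, metis sym)
  show ?thesis
    by (simp add: inner inner2 sum.distrib sw)
qed

lemma pair_sum:
  fixes g p :: "real \<Rightarrow> real"
  assumes "finite S"
  shows "(\<Sum>l\<in>S. \<Sum>h\<in>{h\<in>S. l < h}. (h - l) * (g h - g l) * p l * p h) =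
    (\<Sum>d\<in>S. p d) * (\<Sum>d\<in>S. d * g d * p d) - (\<Sum>d\<in>S. d * p d) * (\<Sum>d\<in>S. g d * p d)"
proof -
  define Q where "Q = (\<Sum>d\<in>S. p d)"
  define A where "A = (\<Sum>d\<in>S. d * g d * p d)"
  define B where "B = (\<Sum>d\<in>S. d * p d)"
  define C where "C = (\<Sum>d\<in>S. g d * p d)"
  have h2: "2 * (\<Sum>l\<in>S. \<Sum>h\<in>{h\<in>S. l < h}. (h - l) * (g h - g l) * p l * p h) =
     (\<Sum>l\<in>S. \<Sum>h\<in>S. (h - l) * (g h - g l) * p l * p h)"
    by (rule pair_sum_half[OF assms]) (simp_all add: algebra_simps)
  have "\<And>l. (\<Sum>h\<in>S. (h - l) * (g h - g l) * p l * p h) =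
      (\<Sum>h\<in>S. p l * (h * g h * p h) - g l * p l * (h * p h) - l * p l * (g h * p h) + l * g l * p l * p h)"
    by (rule sum.cong) (simp_all add: algebra_simps)
  also have "\<And>l. \<dots>l = p l * A - g l * p l * B - l * p l * C + l * g l * p l * Q"
    by (simp add: sum.distrib sum_subtractf sum_distrib_left A_def B_def C_def Q_def)
  finally have "(\<Sum>l\<in>S. \<Sum>h\<in>S. (h - l) * (g h - g l) * p l * p h) =
     (\<Sum>l\<in>S. p l * A - g l * p l * B - l * p l * C + l * g l * p l * Q)" by simp
  also have "\<dots> = (\<Sum>l\<in>S. p l) * A - (\<Sum>l\<in>S. g l * p l) * B - (\<Sum>l\<in>S. l * p l) * C + (\<Sum>l\<in>S. l * g l * p l) * Q"
    by (simp add: sum.distrib sum_subtractf sum_distrib_right)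
  also have "\<dots> = Q * A - C * B - B * C + A * Q"
    by (simp add: A_def B_def C_def Q_def)
  finally show ?thesis using h2 unfolding A_def[symmetric] B_def[symmetric] C_def[symmetric] Q_def[symmetric]
    by (simp add: algebra_simps)
qed



lemma discrete_expect:
  fixes g :: "real \<Rightarrow> real"
  assumes P: "prob_space M" and [measurable]: "D \<in> borel_measurable M" "g \<in> borel_measurable borel"
    and S: "finite S" "\<P>(x in M. D x \<in> S) = 1"
  shows "(\<integral>x. g (D x) \<partial>M) = (\<Sum>d\<in>S. g d * \<P>(x in M. D x = d))"
proof -
  interpret prob_space M by (rule P)
  have AES: "AE x in M. D x \<in> S"
    using AE_prob_1[OF S(2)] by auto
  have ae: "AE x in M. g (D x) = (\<Sum>d\<in>S. g d * indicator {x\<in>space M. D x = d} x)"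
    using AES AE_space
  proof (eventually_elim)
    case (elim x)
    have "(\<Sum>d\<in>S. g d * indicator {x\<in>space M. D x = d} x) = (\<Sum>d\<in>S. if d = D x then g d else 0)"
      by (rule sum.cong) (use elim in \<open>auto simp: indicator_def\<close>)
    also have "\<dots> = g (D x)" using elim S(1) by simp
    finally show ?case by simp
  qed
  have ev: "\<And>d. {x\<in>space M. D x = d} \<in> sets M" by measurable
  have iind: "\<And>d. integrable M (indicat_real {x\<in>space M. D x = d})"
    by (rule integrable_real_indicator[OF ev]) (simp add: less_top[symmetric])
  have "(\<integral>x. g (D x) \<partial>M) = (\<integral>x. (\<Sum>d\<in>S. g d * indicator {x\<in>space M. D x = d} x) \<partial>M)"
    by (rule integral_cong_AE) (use ae in auto)
  also have "\<dots> = (\<Sum>d\<in>S. (\<integral>x. g d * indicator {x\<in>space M. D x = d} x \<partial>M))"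
    by (rule Bochner_Integration.integral_sum) (use iind in auto)
  also have "\<dots> = (\<Sum>d\<in>S. g d * \<P>(x in M. D x = d))"
    by (rule sum.cong) (use ev in auto)
  finally show ?thesis .
qed



lemma cond_mean_const:
  assumes P: "prob_space M" and cm: "is_cond_mean M DY D m"
  shows "(\<integral>x. DY x \<partial>M) = (\<integral>x. m (D x) \<partial>M)"
  using cm unfolding is_cond_mean_def by (auto dest!: bspec[where x=UNIV])

lemma cond_prob_pair:
  fixes D :: "'a \<Rightarrow> real"
  assumes P: "prob_space M" and [measurable]: "D \<in> borel_measurable M" and "l \<noteq> h"
  shows "\<P>(x in M. D x = l \<bar> D x \<in> {l, h}) = \<P>(x in M. D x = l) / (\<P>(x in M. D x = l) + \<P>(x in M. D x = h))"
proof -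
  interpret prob_space M by (rule P)
  have e1: "{x\<in>space M. D x = l \<and> D x \<in> {l, h}} = {x\<in>space M. D x = l}" by auto
  have e2: "{x\<in>space M. D x \<in> {l, h}} = {x\<in>space M. D x = l} \<union> {x\<in>space M. D x = h}" by auto
  have "prob ({x\<in>space M. D x = l} \<union> {x\<in>space M. D x = h}) = prob {x\<in>space M. D x = l} + prob {x\<in>space M. D x = h}"
  proof (rule finite_measure_Union)
    have "\<And>c. D -` {c} \<inter> space M \<in> sets M" by (intro measurable_sets[OF assms(2)] borel_closed) simp
    moreover have "\<And>c. D -` {c} \<inter> space M = {x\<in>space M. D x = c}" by auto
    ultimately have "\<And>c. {x\<in>space M. D x = c} \<in> sets M" by metis
    then show "{x\<in>space M. D x = l} \<in> sets M" "{x\<in>space M. D x = h} \<in> sets M" by auto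
  qed (use assms in auto)
  then show ?thesis unfolding cond_prob_def e1 e2 by simp
qed

lemma part2:
  fixes M :: "'a measure" and DY D :: "'a \<Rightarrow> real" and m :: "real \<Rightarrow> real"
  assumes P: "prob_space M"
    and [measurable]: "DY \<in> borel_measurable M" and [measurable]: "D \<in> borel_measurable M"
    and Y2: "integrable M (\<lambda>x. (DY x)\<^sup>2)" and D2: "integrable M (\<lambda>x. (D x)\<^sup>2)"
    and V: "var_rv M D > 0"
    and cm: "is_cond_mean M DY D m"
    and S: "finite S" "\<forall>d\<in>S. \<P>(x in M. D x = d) > 0" "\<P>(x in M. D x \<in> S) = 1"
  shows "(let p = (\<lambda>d. \<P>(x in M. D x = d));
           w = (\<lambda>l h. (h - l)\<^sup>2 * (p l + p h)\<^sup>2 *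
                  \<P>(x in M. D x = l \<bar> D x \<in> {l, h}) * (1 - \<P>(x in M. D x = l \<bar> D x \<in> {l, h}))
                  / var_rv M D)
       in beta_twfe M DY D =
            (\<Sum>l\<in>S. \<Sum>h\<in>{h\<in>S. h > l}. w l h * ((m h - m l) / (h - l)))
        \<and> (\<forall>l\<in>S. \<forall>h\<in>{h\<in>S. h > l}. w l h = (h - l)\<^sup>2 * p l * p h / var_rv M D)
        \<and> (\<forall>l\<in>S. \<forall>h\<in>{h\<in>S. h > l}. w l h \<ge> 0)
        \<and> (\<Sum>l\<in>S. \<Sum>h\<in>{h\<in>S. h > l}. w l h) = 1)"
proof -
  interpret prob_space M by (rule P)
  note mom = moments[OF P assms(2,3) Y2 D2]
  have [measurable]: "m \<in> borel_measurable borel" using cm unfolding is_cond_mean_def by auto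
  have EY: "(\<integral>x. DY x \<partial>M) = (\<integral>x. m (D x) \<partial>M)" by (rule cond_mean_const[OF P cm])
  have EDY: "(\<integral>x. D x * m (D x) \<partial>M) = (\<integral>x. D x * DY x \<partial>M)"
    by (rule cond_mean_mult(2)[OF P assms(2,3) mom(1) mom(3) cm])
  define p where "p = (\<lambda>d. \<P>(x in M. D x = d))"
  define V where "V = var_rv M D"
  have Vpos: "V > 0" using V by (simp add: V_def)
  have E: "\<And>g. g \<in> borel_measurable borel \<Longrightarrow> (\<integral>x. g (D x) \<partial>M) = (\<Sum>d\<in>S. g d * p d)"
    unfolding p_def by (rule discrete_expect[OF P assms(3) _ S(1) S(3)])
  have Em: "(\<integral>x. m (D x) \<partial>M) = (\<Sum>d\<in>S. m d * p d)" by (rule E) measurable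
  have ED: "(\<integral>x. D x \<partial>M) = (\<Sum>d\<in>S. d * p d)" using E[of "\<lambda>x. x"] by simp
  have ED2: "(\<integral>x. (D x)\<^sup>2 \<partial>M) = (\<Sum>d\<in>S. d * d * p d)" using E[of "\<lambda>x. x\<^sup>2"] by (simp add: power2_eq_square)
  have EDm: "(\<integral>x. D x * m (D x) \<partial>M) = (\<Sum>d\<in>S. d * m d * p d)" using E[of "\<lambda>x. x * m x"] by simp
  have E1: "(\<Sum>d\<in>S. p d) = 1" using E[of "\<lambda>x. 1"] by (simp add: prob_space)
  have Vf: "V = (\<Sum>l\<in>S. \<Sum>h\<in>{h\<in>S. l < h}. (h - l) * (h - l) * p l * p h)"
    using pair_sum[OF S(1), of "\<lambda>x. x" p] mom(4) ED ED2 E1 by (simp add: V_def power2_eq_square)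
  have Cf: "cov_rv M DY D = (\<Sum>l\<in>S. \<Sum>h\<in>{h\<in>S. l < h}. (h - l) * (m h - m l) * p l * p h)"
    using pair_sum[OF S(1), of m p] mom(5) EY EDY Em ED EDm E1 by (simp add: mult.commute)
  define w where "w = (\<lambda>l h. (h - l)\<^sup>2 * (p l + p h)\<^sup>2 *
                  \<P>(x in M. D x = l \<bar> D x \<in> {l, h}) * (1 - \<P>(x in M. D x = l \<bar> D x \<in> {l, h}))
                  / var_rv M D)"
  have pp: "\<And>d. d \<in> S \<Longrightarrow> p d > 0" using S(2) by (simp add: p_def)
  have wf: "\<And>l h. l \<in> S \<Longrightarrow> h \<in> S \<Longrightarrow> l < h \<Longrightarrow> w l h = (h - l)\<^sup>2 * p l * p h / V"
  proof -
    fix l h assume lh: "l \<in> S" "h \<in> S" "l < h"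
    have cp: "\<P>(x in M. D x = l \<bar> D x \<in> {l, h}) = p l / (p l + p h)"
      using cond_prob_pair[OF P assms(3), of l h] lh by (simp add: p_def)
    have pos: "p l + p h > 0" using pp lh by (simp add: add_pos_pos)
    have o: "1 - p l / (p l + p h) = p h / (p l + p h)" using pos by (simp add: field_simps)
    have "(p l + p h)\<^sup>2 * (p l / (p l + p h)) * (p h / (p l + p h)) = p l * p h"
      using pos by (simp add: power2_eq_square)
    then have "(p l + p h)\<^sup>2 * (p l / (p l + p h)) * (1 - p l / (p l + p h)) = p l * p h"
      by (simp add: o)
    note X = this
    have "w l h = (h - l)\<^sup>2 * ((p l + p h)\<^sup>2 * (p l / (p l + p h)) * (1 - p l / (p l + p h))) / V"
      unfolding w_def cp V_def by (simp only: mult.assoc)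
    also have "\<dots> = (h - l)\<^sup>2 * (p l * p h) / V" by (simp only: X)
    finally show "w l h = (h - l)\<^sup>2 * p l * p h / V" by (simp add: mult.assoc)
  qed
  have c1: "beta_twfe M DY D = (\<Sum>l\<in>S. \<Sum>h\<in>{h\<in>S. h > l}. w l h * ((m h - m l) / (h - l)))"
  proof -
    have "beta_twfe M DY D = (\<Sum>l\<in>S. \<Sum>h\<in>{h\<in>S. l < h}. (h - l) * (m h - m l) * p l * p h / V)"
      unfolding beta_twfe_def Cf V_def[symmetric] by (simp add: sum_divide_distrib)
    also have "\<dots> = (\<Sum>l\<in>S. \<Sum>h\<in>{h\<in>S. h > l}. w l h * ((m h - m l) / (h - l)))"
      by (intro sum.cong refl) (auto simp: wf power2_eq_square)
    finally show ?thesis .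
  qed
  have c4: "(\<Sum>l\<in>S. \<Sum>h\<in>{h\<in>S. h > l}. w l h) = 1"
  proof -
    have "(\<Sum>l\<in>S. \<Sum>h\<in>{h\<in>S. h > l}. w l h) = (\<Sum>l\<in>S. \<Sum>h\<in>{h\<in>S. l < h}. (h - l) * (h - l) * p l * p h / V)"
      by (intro sum.cong refl) (auto simp: wf power2_eq_square)
    also have "\<dots> = (\<Sum>l\<in>S. \<Sum>h\<in>{h\<in>S. l < h}. (h - l) * (h - l) * p l * p h) / V"
      by (simp add: sum_divide_distrib)
    also have "\<dots> = V / V" using Vf by simp
    finally show ?thesis using Vpos by simp
  qed
  have c3: "\<forall>l\<in>S. \<forall>h\<in>{h\<in>S. h > l}. w l h \<ge> 0"
    using wf pp Vpos by (auto intro!: divide_nonneg_pos mult_nonneg_nonneg less_imp_le)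
  have G: "beta_twfe M DY D = (\<Sum>l\<in>S. \<Sum>h\<in>{h\<in>S. h > l}. w l h * ((m h - m l) / (h - l)))
        \<and> (\<forall>l\<in>S. \<forall>h\<in>{h\<in>S. h > l}. w l h = (h - l)\<^sup>2 * p l * p h / var_rv M D)
        \<and> (\<forall>l\<in>S. \<forall>h\<in>{h\<in>S. h > l}. w l h \<ge> 0)
        \<and> (\<Sum>l\<in>S. \<Sum>h\<in>{h\<in>S. h > l}. w l h) = 1"
    using c1 c3 c4 wf by (simp add: V_def)
  show ?thesis using G unfolding Let_def w_def p_def .
qed



lemma prod_integrable:
  fixes u v :: "real \<Rightarrow> real"
  assumes iu: "integrable lborel u" and iv: "integrable lborel v"
  shows "integrable (lborel \<Otimes>\<^sub>M lborel) (\<lambda>(x,y). u x * v y)"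
proof (rule lborel_pair.Fubini_integrable)
  have [measurable]: "u \<in> borel_measurable borel" "v \<in> borel_measurable borel"
    using iu iv by (auto dest: borel_measurable_integrable)
  show "(\<lambda>(x,y). u x * v y) \<in> borel_measurable (lborel \<Otimes>\<^sub>M lborel)" by measurable
  have "(\<lambda>x. \<integral>y. norm ((\<lambda>(x,y). u x * v y) (x, y)) \<partial>lborel) = (\<lambda>x. \<bar>u x\<bar> * (\<integral>y. \<bar>v y\<bar> \<partial>lborel))"
    by (simp add: abs_mult)
  moreover have "integrable lborel (\<lambda>x. \<bar>u x\<bar> * (\<integral>y. \<bar>v y\<bar> \<partial>lborel))"
    using iu by (intro integrable_mult_left integrable_abs)
  ultimately show "integrable lborel (\<lambda>x. \<integral>y. norm ((\<lambda>(x,y). u x * v y) (x, y)) \<partial>lborel)" by simp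
  show "AE x in lborel. integrable lborel (\<lambda>y. (\<lambda>(x,y). u x * v y) (x, y))"
    using iv by (auto intro!: integrable_mult_right)
qed

lemma bounded_mult_integrable:
  fixes \<psi> \<phi> :: "real \<Rightarrow> real"
  assumes i: "integrable lborel \<phi>" and [measurable]: "\<psi> \<in> borel_measurable borel"
    and b: "\<And>x. \<phi> x \<noteq> 0 \<Longrightarrow> \<bar>\<psi> x\<bar> \<le> K"
  shows "integrable lborel (\<lambda>x. \<psi> x * \<phi> x)"
proof (rule Bochner_Integration.integrable_bound)
  show "integrable lborel (\<lambda>x. K * \<bar>\<phi> x\<bar>)" using i by (intro integrable_mult_right integrable_abs)
  have [measurable]: "\<phi> \<in> borel_measurable borel" using i by (auto dest: borel_measurable_integrable)
  show "(\<lambda>x. \<psi> x * \<phi> x) \<in> borel_measurable lborel" by measurable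
  show "AE x in lborel. norm (\<psi> x * \<phi> x) \<le> norm (K * \<bar>\<phi> x\<bar>)"
  proof (intro AE_I2)
    fix x
    show "norm (\<psi> x * \<phi> x) \<le> norm (K * \<bar>\<phi> x\<bar>)"
    proof (cases "\<phi> x = 0")
      case True then show ?thesis by simp
    next
      case False
      then have "\<bar>\<psi> x\<bar> \<le> K" by (rule b)
      then have "\<bar>\<psi> x\<bar> * \<bar>\<phi> x\<bar> \<le> K * \<bar>\<phi> x\<bar>" by (intro mult_right_mono) auto
      moreover have "K * \<bar>\<phi> x\<bar> \<le> \<bar>K\<bar> * \<bar>\<phi> x\<bar>" by (intro mult_right_mono) auto
      ultimately have "\<bar>\<psi> x\<bar> * \<bar>\<phi> x\<bar> \<le> \<bar>K\<bar> * \<bar>\<phi> x\<bar>" by linarith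
      then show ?thesis by (simp add: abs_mult)
    qed
  qed
qed



lemma lin4:
  fixes u1 u2 u3 u4 :: "'a \<Rightarrow> real"
  assumes "integrable M u1" "integrable M u2" "integrable M u3" "integrable M u4"
  shows "(\<integral>x. c1 * u1 x - c2 * u2 x - c3 * u3 x + c4 * u4 x \<partial>M) =
     c1 * integral\<^sup>L M u1 - c2 * integral\<^sup>L M u2 - c3 * integral\<^sup>L M u3 + c4 * integral\<^sup>L M u4"
  using assms by simp

lemma tri:
  fixes f g :: "real \<Rightarrow> real" and a b G :: real
  assumes [measurable]: "f \<in> borel_measurable borel" "g \<in> borel_measurable borel"
    and fi: "set_integrable lborel {a..b} f"
    and gb: "\<And>x. x \<in> {a..b} \<Longrightarrow> \<bar>g x\<bar> \<le> G"
  shows "(LBINT l:{a..b}. LBINT h:{l..b}. (h - l) * (g h - g l) * f h * f l) =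
    (LBINT x:{a..b}. f x) * (LBINT x:{a..b}. x * g x * f x) - (LBINT x:{a..b}. x * f x) * (LBINT x:{a..b}. g x * f x)"
proof -
  define \<iota> where "\<iota> = (indicator {a..b} :: real \<Rightarrow> real)"
  define \<phi> where "\<phi> x = \<iota> x * f x" for x
  have [measurable]: "\<iota> \<in> borel_measurable borel" unfolding \<iota>_def by measurable
  have [measurable]: "\<phi> \<in> borel_measurable borel" unfolding \<phi>_def by measurable
  have i\<phi>: "integrable lborel \<phi>" using fi by (simp add: set_integrable_def \<phi>_def[abs_def] \<iota>_def)
  have \<phi>0: "\<And>x. \<phi> x \<noteq> 0 \<Longrightarrow> x \<in> {a..b}" by (auto simp: \<phi>_def \<iota>_def indicator_def)
  define X where "X = max \<bar>a\<bar> \<bar>b\<bar>"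
  have xb: "\<And>x. x \<in> {a..b} \<Longrightarrow> \<bar>x\<bar> \<le> X" by (auto simp: X_def)
  have X0: "0 \<le> X" by (simp add: X_def)
  have xgb: "\<And>x. x \<in> {a..b} \<Longrightarrow> \<bar>x * g x\<bar> \<le> X * G"
    unfolding abs_mult by (intro mult_mono xb gb X0 abs_ge_zero)
  have i1: "integrable lborel (\<lambda>x. g x * \<phi> x)"
    by (rule bounded_mult_integrable[OF i\<phi>]) (auto dest: \<phi>0 intro: gb)
  have i2: "integrable lborel (\<lambda>x. x * \<phi> x)"
    by (rule bounded_mult_integrable[OF i\<phi>]) (auto dest: \<phi>0 intro: xb)
  have i3: "integrable lborel (\<lambda>x. x * g x * \<phi> x)"
    by (rule bounded_mult_integrable[OF i\<phi>, where K="X * G"]) (auto dest: \<phi>0 intro: xgb)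
  define Q where "Q = (\<integral>x. \<phi> x \<partial>lborel)"
  define A where "A = (\<integral>x. x * g x * \<phi> x \<partial>lborel)"
  define B where "B = (\<integral>x. x * \<phi> x \<partial>lborel)"
  define C where "C = (\<integral>x. g x * \<phi> x \<partial>lborel)"
  define F where "F l h = (h - l) * (g h - g l)" for l h :: real
  define T where "T l h = (if l \<le> h then F l h else 0) * (\<phi> l * \<phi> h)" for l h :: real
  define K where "K = 4 * X * G"
  have Fb: "\<And>l h. l \<in> {a..b} \<Longrightarrow> h \<in> {a..b} \<Longrightarrow> \<bar>F l h\<bar> \<le> K"
  proof -
    fix l h assume lh: "l \<in> {a..b}" "h \<in> {a..b}"
    have "\<bar>h - l\<bar> \<le> 2 * X" using xb[OF lh(1)] xb[OF lh(2)] by linarith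
    moreover have "\<bar>g h - g l\<bar> \<le> 2 * G" using gb[OF lh(1)] gb[OF lh(2)] by linarith
    ultimately have "\<bar>h - l\<bar> * \<bar>g h - g l\<bar> \<le> (2 * X) * (2 * G)"
      by (intro mult_mono) (use X0 in auto)
    then show "\<bar>F l h\<bar> \<le> K" by (simp add: F_def K_def abs_mult)
  qed
  have Tb: "\<And>l h. \<bar>T l h\<bar> \<le> K * \<bar>\<phi> l\<bar> * \<bar>\<phi> h\<bar>"
  proof -
    fix l h
    show "\<bar>T l h\<bar> \<le> K * \<bar>\<phi> l\<bar> * \<bar>\<phi> h\<bar>"
    proof (cases "\<phi> l \<noteq> 0 \<and> \<phi> h \<noteq> 0")
      case True
      then have "\<bar>F l h\<bar> \<le> K" using \<phi>0 Fb by auto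
      moreover then have "0 \<le> K" by (meson abs_ge_zero order_trans)
      ultimately have "\<bar>(if l \<le> h then F l h else 0)\<bar> \<le> K" by auto
      then have "\<bar>(if l \<le> h then F l h else 0)\<bar> * (\<bar>\<phi> l\<bar> * \<bar>\<phi> h\<bar>) \<le> K * (\<bar>\<phi> l\<bar> * \<bar>\<phi> h\<bar>)"
        by (intro mult_right_mono) auto
      then show ?thesis by (simp add: T_def abs_mult mult.assoc)
    next
      case False then show ?thesis by (auto simp: T_def)
    qed
  qed
  have [measurable]: "(\<lambda>(l, h). T l h) \<in> borel_measurable (lborel \<Otimes>\<^sub>M lborel)"
    unfolding T_def F_def by measurable
  have iT: "integrable (lborel \<Otimes>\<^sub>M lborel) (\<lambda>(l, h). T l h)"
  proof (rule Bochner_Integration.integrable_bound)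
    show "integrable (lborel \<Otimes>\<^sub>M lborel) (\<lambda>(x, y). (K * \<bar>\<phi> x\<bar>) * \<bar>\<phi> y\<bar>)"
      using i\<phi> by (intro prod_integrable integrable_mult_right integrable_abs)
    show "AE x in lborel \<Otimes>\<^sub>M lborel. norm ((\<lambda>(l, h). T l h) x) \<le> norm ((\<lambda>(x, y). (K * \<bar>\<phi> x\<bar>) * \<bar>\<phi> y\<bar>) x)"
      using Tb by (auto intro!: AE_I2 order_trans[OF _ abs_ge_self])
  qed simp
  have iTl: "\<And>l. integrable lborel (\<lambda>h. T l h)"
  proof -
    fix l
    have "integrable lborel (\<lambda>h. ((if l \<le> h then F l h else 0) * \<phi> l) * \<phi> h)"
    proof (rule bounded_mult_integrable[OF i\<phi>, where K="K * \<bar>\<phi> l\<bar>"])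
      show "(\<lambda>h. (if l \<le> h then F l h else 0) * \<phi> l) \<in> borel_measurable borel"
        unfolding F_def by measurable
      fix h assume "\<phi> h \<noteq> 0"
      show "\<bar>(if l \<le> h then F l h else 0) * \<phi> l\<bar> \<le> K * \<bar>\<phi> l\<bar>"
        using Tb[of l h] \<open>\<phi> h \<noteq> 0\<close> unfolding T_def
        by (cases "\<phi> l = 0") (auto simp: abs_mult mult.assoc)
    qed
    then show "integrable lborel (\<lambda>h. T l h)" by (simp add: T_def mult.assoc)
  qed
  have iTr: "\<And>l. integrable lborel (\<lambda>h. T h l)"
  proof -
    fix l
    have "integrable lborel (\<lambda>h. ((if h \<le> l then F h l else 0) * \<phi> l) * \<phi> h)"
    proof (rule bounded_mult_integrable[OF i\<phi>, where K="K * \<bar>\<phi> l\<bar>"])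
      show "(\<lambda>h. (if h \<le> l then F h l else 0) * \<phi> l) \<in> borel_measurable borel"
        unfolding F_def by measurable
      fix h assume "\<phi> h \<noteq> 0"
      show "\<bar>(if h \<le> l then F h l else 0) * \<phi> l\<bar> \<le> K * \<bar>\<phi> l\<bar>"
        using Tb[of h l] \<open>\<phi> h \<noteq> 0\<close> unfolding T_def
        by (cases "\<phi> l = 0") (auto simp: abs_mult mult.assoc mult.commute)
    qed
    moreover have "(\<lambda>h. ((if h \<le> l then F h l else 0) * \<phi> l) * \<phi> h) = (\<lambda>h. T h l)"
      by (rule ext) (simp add: T_def)
    ultimately show "integrable lborel (\<lambda>h. T h l)" by simp
  qed
  have s1: "(LBINT l:{a..b}. LBINT h:{l..b}. (h - l) * (g h - g l) * f h * f l) = (\<integral>l. \<integral>h. T l h \<partial>lborel \<partial>lborel)"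
    unfolding set_lebesgue_integral_def
  proof (intro Bochner_Integration.integral_cong refl)
    fix l
    show "indicator {a..b} l *\<^sub>R (\<integral>h. indicator {l..b} h *\<^sub>R ((h - l) * (g h - g l) * f h * f l) \<partial>lborel) = (\<integral>h. T l h \<partial>lborel)"
    proof (cases "l \<in> {a..b}")
      case True
      have "(\<integral>h. indicator {l..b} h *\<^sub>R ((h - l) * (g h - g l) * f h * f l) \<partial>lborel) = (\<integral>h. T l h \<partial>lborel)"
        using True by (intro Bochner_Integration.integral_cong refl) (auto simp: T_def F_def \<phi>_def \<iota>_def indicator_def)
      then show ?thesis using True by simp
    next
      case False
      then show ?thesis by (simp add: T_def \<phi>_def \<iota>_def)
    qed
  qed
  have s2: "(\<integral>l. \<integral>h. T l h \<partial>lborel \<partial>lborel) = (\<integral>l. \<integral>h. T h l \<partial>lborel \<partial>lborel)"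
    using lborel_pair.Fubini_integral[of "\<lambda>l h. T l h"] iT by simp
  have iT1: "integrable lborel (\<lambda>l. \<integral>h. T l h \<partial>lborel)"
    using lborel_pair.integrable_fst'[OF iT] by simp
  have iTsw: "integrable (lborel \<Otimes>\<^sub>M lborel) (\<lambda>(l, h). T h l)"
    using lborel_pair.integrable_product_swap_iff[of "\<lambda>(l, h). T l h"] iT by simp
  have iT2: "integrable lborel (\<lambda>l. \<integral>h. T h l \<partial>lborel)"
    using lborel_pair.integrable_fst'[OF iTsw] by simp
  have TT: "\<And>l h. T l h + T h l = F l h * \<phi> l * \<phi> h"
    by (auto simp: T_def F_def algebra_simps)
  have s3: "2 * (\<integral>l. \<integral>h. T l h \<partial>lborel \<partial>lborel) = (\<integral>l. \<integral>h. F l h * \<phi> l * \<phi> h \<partial>lborel \<partial>lborel)"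
  proof -
    have "2 * (\<integral>l. \<integral>h. T l h \<partial>lborel \<partial>lborel) = (\<integral>l. \<integral>h. T l h \<partial>lborel \<partial>lborel) + (\<integral>l. \<integral>h. T h l \<partial>lborel \<partial>lborel)"
      using s2 by simp
    also have "\<dots> = (\<integral>l. (\<integral>h. T l h \<partial>lborel) + (\<integral>h. T h l \<partial>lborel) \<partial>lborel)"
      by (rule Bochner_Integration.integral_add[symmetric, OF iT1 iT2])
    also have "\<dots> = (\<integral>l. \<integral>h. F l h * \<phi> l * \<phi> h \<partial>lborel \<partial>lborel)"
    proof (intro Bochner_Integration.integral_cong refl)
      fix l
      show "(\<integral>h. T l h \<partial>lborel) + (\<integral>h. T h l \<partial>lborel) = (\<integral>h. F l h * \<phi> l * \<phi> h \<partial>lborel)"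
        using Bochner_Integration.integral_add[OF iTl[of l] iTr[of l]] by (simp add: TT)
    qed
    finally show ?thesis .
  qed
  have s4: "\<And>l. (\<integral>h. F l h * \<phi> l * \<phi> h \<partial>lborel) = \<phi> l * A - (g l * \<phi> l) * B - (l * \<phi> l) * C + (l * g l * \<phi> l) * Q"
  proof -
    fix l
    have "(\<integral>h. F l h * \<phi> l * \<phi> h \<partial>lborel) =
        (\<integral>h. \<phi> l * (h * g h * \<phi> h) - (g l * \<phi> l) * (h * \<phi> h) - (l * \<phi> l) * (g h * \<phi> h) + (l * g l * \<phi> l) * \<phi> h \<partial>lborel)"
      by (intro Bochner_Integration.integral_cong refl) (simp add: F_def algebra_simps)
    also have "\<dots> = \<phi> l * A - (g l * \<phi> l) * B - (l * \<phi> l) * C + (l * g l * \<phi> l) * Q"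
      unfolding A_def B_def C_def Q_def by (rule lin4[OF i3 i2 i1 i\<phi>])
    finally show "(\<integral>h. F l h * \<phi> l * \<phi> h \<partial>lborel) = \<phi> l * A - (g l * \<phi> l) * B - (l * \<phi> l) * C + (l * g l * \<phi> l) * Q" .
  qed
  have s5: "(\<integral>l. \<integral>h. F l h * \<phi> l * \<phi> h \<partial>lborel \<partial>lborel) = 2 * (Q * A - B * C)"
  proof -
    have "(\<integral>l. \<integral>h. F l h * \<phi> l * \<phi> h \<partial>lborel \<partial>lborel) =
       (\<integral>l. A * \<phi> l - B * (g l * \<phi> l) - C * (l * \<phi> l) + Q * (l * g l * \<phi> l) \<partial>lborel)"
      by (intro Bochner_Integration.integral_cong refl) (simp only: s4, simp add: algebra_simps)
    also have "\<dots> = A * Q - B * C - C * B + Q * A"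
      unfolding A_def B_def C_def Q_def
      by (subst lin4[OF i\<phi> i1 i2 i3]) simp
    finally show ?thesis by (simp add: algebra_simps)
  qed
  have eQ: "(LBINT x:{a..b}. f x) = Q" unfolding Q_def set_lebesgue_integral_def
    by (intro Bochner_Integration.integral_cong refl) (simp add: \<phi>_def \<iota>_def)
  have eA: "(LBINT x:{a..b}. x * g x * f x) = A" unfolding A_def set_lebesgue_integral_def
    by (intro Bochner_Integration.integral_cong refl) (simp add: \<phi>_def \<iota>_def)
  have eB: "(LBINT x:{a..b}. x * f x) = B" unfolding B_def set_lebesgue_integral_def
    by (intro Bochner_Integration.integral_cong refl) (simp add: \<phi>_def \<iota>_def)
  have eC: "(LBINT x:{a..b}. g x * f x) = C" unfolding C_def set_lebesgue_integral_def
    by (intro Bochner_Integration.integral_cong refl) (simp add: \<phi>_def \<iota>_def)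
  show ?thesis unfolding eQ eA eB eC s1 using s3 s5 by simp
qed



lemma dens_eq:
  fixes D :: "'a \<Rightarrow> real" and f :: "real \<Rightarrow> real"
  assumes P: "prob_space M" and [measurable]: "D \<in> borel_measurable M" "f \<in> borel_measurable borel"
    and a0: "0 < a"
    and fi: "set_integrable lborel {a..b} f" and fpos: "\<forall>x\<in>{a..b}. f x > 0"
    and dist: "\<forall>A \<in> sets borel. \<P>(x in M. D x \<in> A) =
           \<P>(x in M. D x = 0) * indicator A 0 + (LBINT x:(A \<inter> {a..b}). f x)"
  shows "density (distr M borel D) (\<lambda>y. ennreal (indicator {a..b} y)) =
         density lborel (\<lambda>y. ennreal (indicator {a..b} y * f y))"
proof (rule measure_eqI)
  interpret prob_space M by (rule P)
  show "sets (density (distr M borel D) (\<lambda>y. ennreal (indicator {a..b} y))) = sets (density lborel (\<lambda>y. ennreal (indicator {a..b} y * f y)))"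
    by simp
  fix A assume "A \<in> sets (density (distr M borel D) (\<lambda>y. ennreal (indicator {a..b} y)))"
  then have A[measurable]: "A \<in> sets borel" by simp
  have AI[measurable]: "A \<inter> {a..b} \<in> sets borel" by measurable
  have 0: "0 \<notin> A \<inter> {a..b}" using a0 by auto
  have "emeasure (density (distr M borel D) (\<lambda>y. ennreal (indicator {a..b} y))) A =
      (\<integral>\<^sup>+y. ennreal (indicator {a..b} y) * indicator A y \<partial>distr M borel D)"
    by (rule emeasure_density) simp_all
  also have "\<dots> = (\<integral>\<^sup>+y. indicator (A \<inter> {a..b}) y \<partial>distr M borel D)"
    by (intro nn_integral_cong) (auto simp: indicator_def)
  also have "\<dots> = emeasure (distr M borel D) (A \<inter> {a..b})"
    by (rule nn_integral_indicator) simp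
  also have "\<dots> = emeasure M (D -` (A \<inter> {a..b}) \<inter> space M)"
    by (rule emeasure_distr) simp_all
  also have "\<dots> = ennreal (\<P>(x in M. D x \<in> A \<inter> {a..b}))"
    by (simp add: emeasure_eq_measure vimage_def Collect_conj_eq Int_commute)
  also have "\<dots> = ennreal (LBINT x:(A \<inter> {a..b}). f x)"
  proof -
    have d: "\<P>(x in M. D x \<in> A \<inter> {a..b}) = \<P>(x in M. D x = 0) * indicator (A \<inter> {a..b}) 0 + (LBINT x:((A \<inter> {a..b}) \<inter> {a..b}). f x)"
      using bspec[OF dist AI] .
    have e: "(A \<inter> {a..b}) \<inter> {a..b} = A \<inter> {a..b}" by auto
    have "indicator (A \<inter> {a..b}) (0::real) = (0::real)" using 0 by simp
    then show ?thesis using d unfolding e by simp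
  qed
  finally have L: "emeasure (density (distr M borel D) (\<lambda>y. ennreal (indicator {a..b} y))) A = ennreal (LBINT x:(A \<inter> {a..b}). f x)" .
  have si: "set_integrable lborel (A \<inter> {a..b}) f"
    by (rule set_integrable_subset[OF fi]) auto
  have "emeasure (density lborel (\<lambda>y. ennreal (indicator {a..b} y * f y))) A =
      (\<integral>\<^sup>+y. ennreal (indicator {a..b} y * f y) * indicator A y \<partial>lborel)"
    by (rule emeasure_density) simp_all
  also have "\<dots> = (\<integral>\<^sup>+y. ennreal (indicator (A \<inter> {a..b}) y *\<^sub>R f y) \<partial>lborel)"
    by (intro nn_integral_cong) (auto simp: indicator_def)
  also have "\<dots> = ennreal (\<integral>y. indicator (A \<inter> {a..b}) y *\<^sub>R f y \<partial>lborel)"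
  proof (rule nn_integral_eq_integral)
    show "integrable lborel (\<lambda>y. indicator (A \<inter> {a..b}) y *\<^sub>R f y)" using si by (simp add: set_integrable_def)
    show "AE x in lborel. 0 \<le> indicator (A \<inter> {a..b}) x *\<^sub>R f x"
      using fpos by (auto intro!: AE_I2 simp: indicator_def less_imp_le)
  qed
  also have "\<dots> = ennreal (LBINT x:(A \<inter> {a..b}). f x)" by (simp add: set_lebesgue_integral_def)
  finally show "emeasure (density (distr M borel D) (\<lambda>y. ennreal (indicator {a..b} y))) A =
      emeasure (density lborel (\<lambda>y. ennreal (indicator {a..b} y * f y))) A" using L by simp
qed



lemma cont_expect:
  fixes D :: "'a \<Rightarrow> real" and f g :: "real \<Rightarrow> real"
  assumes P: "prob_space M" and [measurable]: "D \<in> borel_measurable M" "f \<in> borel_measurable borel"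
    "g \<in> borel_measurable borel"
    and a0: "0 < a"
    and fi: "set_integrable lborel {a..b} f" and fpos: "\<forall>x\<in>{a..b}. f x > 0"
    and dist: "\<forall>A \<in> sets borel. \<P>(x in M. D x \<in> A) =
           \<P>(x in M. D x = 0) * indicator A 0 + (LBINT x:(A \<inter> {a..b}). f x)"
    and gb: "\<And>x. x \<in> {a..b} \<Longrightarrow> \<bar>g x\<bar> \<le> G"
  shows "(\<integral>x. g (D x) \<partial>M) = \<P>(x in M. D x = 0) * g 0 + (LBINT x:{a..b}. g x * f x)"
proof -
  interpret prob_space M by (rule P)
  define I where "I = {a..b}"
  define p0 where "p0 = \<P>(x in M. D x = 0)"
  have d1: "\<P>(x in M. D x \<in> UNIV) = p0 + (LBINT x:I. f x)"
    using bspec[OF dist, of UNIV] by (simp add: p0_def I_def)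
  have "\<P>(x in M. D x \<in> UNIV) = 1" by (simp add: prob_space)
  then have q: "p0 + (LBINT x:I. f x) = 1" using d1 by simp
  have S[measurable]: "{0} \<union> I \<in> sets borel" unfolding I_def by measurable
  have d2: "\<P>(x in M. D x \<in> {0} \<union> I) = p0 * indicator ({0} \<union> I) 0 + (LBINT x:(({0} \<union> I) \<inter> {a..b}). f x)"
    using bspec[OF dist S] by (simp add: p0_def)
  have e: "({0} \<union> I) \<inter> {a..b} = I" by (auto simp: I_def)
  have "\<P>(x in M. D x \<in> {0} \<union> I) = 1" using d2 q unfolding e by simp
  then have AES: "AE x in M. D x \<in> {0} \<union> I"
    using AE_prob_1[of "{x\<in>space M. D x \<in> {0} \<union> I}"] by auto
  have 0: "0 \<notin> I" using a0 by (auto simp: I_def)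
  have ev0[measurable]: "{x\<in>space M. D x = 0} \<in> sets M" by measurable
  have ae: "AE x in M. g (D x) = g 0 * indicator {x\<in>space M. D x = 0} x + indicator I (D x) * g (D x)"
    using AES AE_space
  proof eventually_elim
    case (elim x)
    then show ?case using 0 by (auto simp: indicator_def)
  qed
  have i0: "integrable M (indicat_real {x\<in>space M. D x = 0})"
    by (rule integrable_real_indicator[OF ev0]) (simp add: less_top[symmetric])
  have iI: "integrable M (\<lambda>x. indicator I (D x) * g (D x))"
  proof (rule Bochner_Integration.integrable_bound)
    show "integrable M (\<lambda>x. \<bar>G\<bar>)" by simp
    show "(\<lambda>x. indicator I (D x) * g (D x)) \<in> borel_measurable M" unfolding I_def by measurable
    show "AE x in M. norm (indicator I (D x) * g (D x)) \<le> norm \<bar>G\<bar>"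
      using gb by (auto intro!: AE_I2 simp: indicator_def I_def intro: order_trans[OF _ abs_ge_self])
  qed
  have "(\<integral>x. g (D x) \<partial>M) = (\<integral>x. g 0 * indicator {x\<in>space M. D x = 0} x + indicator I (D x) * g (D x) \<partial>M)"
    by (rule integral_cong_AE) (use ae in \<open>auto simp: I_def\<close>)
  also have "\<dots> = g 0 * p0 + (\<integral>x. indicator I (D x) * g (D x) \<partial>M)"
    using i0 iI by (simp add: p0_def)
  also have "(\<integral>x. indicator I (D x) * g (D x) \<partial>M) = (\<integral>y. indicator I y * g y \<partial>distr M borel D)"
    by (rule integral_distr[symmetric]) (simp_all add: I_def)
  also have "\<dots> = (\<integral>y. g y \<partial>density (distr M borel D) (\<lambda>y. ennreal (indicator I y)))"
    by (subst integral_density) (simp_all add: I_def)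
  also have "\<dots> = (\<integral>y. g y \<partial>density lborel (\<lambda>y. ennreal (indicator I y * f y)))"
    unfolding I_def by (subst dens_eq[OF P assms(2,3) a0 fi fpos dist]) (rule refl)
  also have "\<dots> = (\<integral>y. (indicator I y * f y) *\<^sub>R g y \<partial>lborel)"
    by (rule integral_density) (use fpos in \<open>auto simp: I_def indicator_def less_imp_le intro!: AE_I2\<close>)
  also have "\<dots> = (LBINT x:{a..b}. g x * f x)"
    unfolding set_lebesgue_integral_def I_def by (simp add: mult_ac)
  finally show ?thesis by (simp add: p0_def mult.commute)
qed



lemma cont_bound:
  fixes g :: "real \<Rightarrow> real"
  assumes "continuous_on {a..b} g"
  shows "\<exists>G. \<forall>x\<in>{a..b}. \<bar>g x\<bar> \<le> G"
proof -
  have "compact (g ` {a..b})" by (rule compact_continuous_image[OF assms compact_Icc])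
  then have "bounded (g ` {a..b})" by (rule compact_imp_bounded)
  then show ?thesis unfolding Elementary_Metric_Spaces.bounded_iff by auto
qed

lemma set_int_bounded:
  fixes f \<psi> :: "real \<Rightarrow> real"
  assumes fi: "set_integrable lborel {a..b} f" and [measurable]: "\<psi> \<in> borel_measurable borel"
    and b: "\<And>x. x \<in> {a..b} \<Longrightarrow> \<bar>\<psi> x\<bar> \<le> K"
  shows "set_integrable lborel {a..b} (\<lambda>x. \<psi> x * f x)"
proof -
  have i: "integrable lborel (\<lambda>x. indicator {a..b} x * f x)" using fi by (simp add: set_integrable_def)
  have "integrable lborel (\<lambda>x. \<psi> x * (indicator {a..b} x * f x))"
    by (rule bounded_mult_integrable[OF i]) (auto intro: b simp: indicator_def split: if_splits)
  then show ?thesis unfolding set_integrable_def by (simp add: mult_ac)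
qed

lemma cont_of_deriv:
  fixes m m' :: "real \<Rightarrow> real"
  assumes "\<forall>x\<in>{a..b}. (m has_real_derivative m' x) (at x within {a..b})"
  shows "continuous_on {a..b} m"
  unfolding continuous_on_eq_continuous_within using assms by (auto intro: DERIV_continuous)



lemma part1:
  fixes M :: "'a measure" and DY D :: "'a \<Rightarrow> real" and m :: "real \<Rightarrow> real"
    and dL dU :: real and f :: "real \<Rightarrow> real"
  assumes P: "prob_space M"
    and [measurable]: "DY \<in> borel_measurable M" and [measurable]: "D \<in> borel_measurable M"
    and Y2: "integrable M (\<lambda>x. (DY x)\<^sup>2)" and D2: "integrable M (\<lambda>x. (D x)\<^sup>2)"
    and V: "var_rv M D > 0"
    and cm: "is_cond_mean M DY D m"
    and H: "0 < dL \<and> dL < dU \<and> \<P>(x in M. D x = 0) > 0 \<and>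
       f \<in> borel_measurable borel \<and> set_integrable lborel {dL..dU} f \<and>
       (\<forall>x\<in>{dL..dU}. f x > 0) \<and>
       (\<forall>A \<in> sets borel. \<P>(x in M. D x \<in> A) =
           \<P>(x in M. D x = 0) * indicator A 0 + (LBINT x:(A \<inter> {dL..dU}). f x)) \<and>
       (\<exists>m'. continuous_on {dL..dU} m' \<and>
          (\<forall>x\<in>{dL..dU}. (m has_real_derivative m' x) (at x within {dL..dU})))"
  shows "(let p0 = \<P>(x in M. D x = 0);
           w1 = (\<lambda>l h. (h - l)\<^sup>2 * f h * f l / var_rv M D);
           w0 = (\<lambda>h. h\<^sup>2 * f h * p0 / var_rv M D)
       in beta_twfe M DY D =
            (LBINT l:{dL..dU}. LBINT h:{l..dU}. w1 l h * ((m h - m l) / (h - l)))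
          + (LBINT h:{dL..dU}. w0 h * ((m h - m 0) / h))
        \<and> (\<forall>l\<in>{dL..dU}. \<forall>h\<in>{l..dU}. w1 l h \<ge> 0)
        \<and> (\<forall>h\<in>{dL..dU}. w0 h \<ge> 0)
        \<and> (LBINT l:{dL..dU}. LBINT h:{l..dU}. w1 l h) + (LBINT h:{dL..dU}. w0 h) = 1
        \<and> (\<forall>l\<in>{dL..dU}. \<forall>h\<in>{dL..dU}. w1 l h =
              (h - l)\<^sup>2 * (f h + f l)\<^sup>2 * (f h / (f h + f l)) * (f l / (f h + f l)) / var_rv M D)
        \<and> (\<forall>h\<in>{dL..dU}. w0 h =
              h\<^sup>2 * (f h + p0)\<^sup>2 * (f h / (f h + p0)) * (p0 / (f h + p0)) / var_rv M D))"
proof -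
  interpret prob_space M by (rule P)
  have dL0: "0 < dL" and p0pos: "\<P>(x in M. D x = 0) > 0" and fm[measurable]: "f \<in> borel_measurable borel"
    and fi: "set_integrable lborel {dL..dU} f" and fpos: "\<forall>x\<in>{dL..dU}. f x > 0"
    and dist: "\<forall>A \<in> sets borel. \<P>(x in M. D x \<in> A) =
           \<P>(x in M. D x = 0) * indicator A 0 + (LBINT x:(A \<inter> {dL..dU}). f x)"
    using H by auto
  obtain m' where "\<forall>x\<in>{dL..dU}. (m has_real_derivative m' x) (at x within {dL..dU})" using H by auto
  then have mc: "continuous_on {dL..dU} m" by (rule cont_of_deriv)
  have [measurable]: "m \<in> borel_measurable borel" using cm unfolding is_cond_mean_def by auto
  define p0 where "p0 = \<P>(x in M. D x = 0)"
  define V where "V = var_rv M D"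
  have Vpos: "V > 0" using V by (simp add: V_def)
  note CE = cont_expect[OF P assms(3) fm _ dL0 fi fpos dist]
  obtain Gm where Gm: "\<forall>x\<in>{dL..dU}. \<bar>m x\<bar> \<le> Gm" using cont_bound[OF mc] by auto
  obtain Gx where Gx: "\<forall>x\<in>{dL..dU}. \<bar>x\<bar> \<le> Gx" using cont_bound[of dL dU "\<lambda>x. x", OF continuous_on_id] by auto
  obtain Gxm where Gxm: "\<forall>x\<in>{dL..dU}. \<bar>x * m x\<bar> \<le> Gxm"
    using cont_bound[of dL dU "\<lambda>x. x * m x", OF continuous_on_mult[OF continuous_on_id mc]] by auto
  obtain Gxx where Gxx: "\<forall>x\<in>{dL..dU}. \<bar>x * x\<bar> \<le> Gxx"
    using cont_bound[of dL dU "\<lambda>x. x * x", OF continuous_on_mult[OF continuous_on_id continuous_on_id]] by auto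
  define Q where "Q = (LBINT x:{dL..dU}. f x)"
  define B where "B = (LBINT x:{dL..dU}. x * f x)"
  define Am where "Am = (LBINT x:{dL..dU}. x * m x * f x)"
  define Cm where "Cm = (LBINT x:{dL..dU}. m x * f x)"
  define Ai where "Ai = (LBINT x:{dL..dU}. x * x * f x)"
  have E1: "1 = p0 + Q"
    using CE[of "\<lambda>x. 1" 1] by (simp add: p0_def Q_def prob_space)
  have Em: "(\<integral>x. m (D x) \<partial>M) = p0 * m 0 + Cm"
    using CE[of m Gm] Gm by (simp add: p0_def Cm_def)
  have ED: "(\<integral>x. D x \<partial>M) = B"
    using CE[of "\<lambda>x. x" Gx] Gx by (simp add: B_def)
  have ED2: "(\<integral>x. (D x)\<^sup>2 \<partial>M) = Ai"
    using CE[of "\<lambda>x. x * x" Gxx] Gxx by (simp add: Ai_def power2_eq_square)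
  have EDm: "(\<integral>x. D x * m (D x) \<partial>M) = Am"
    using CE[of "\<lambda>x. x * m x" Gxm] Gxm by (simp add: Am_def)
  note mom = moments[OF P assms(2,3) Y2 D2]
  have EY: "(\<integral>x. DY x \<partial>M) = (\<integral>x. m (D x) \<partial>M)"
    using cm unfolding is_cond_mean_def by (auto dest!: bspec[where x=UNIV])
  have EDY: "(\<integral>x. D x * m (D x) \<partial>M) = (\<integral>x. D x * DY x \<partial>M)"
    by (rule cond_mean_mult(2)[OF P assms(2,3) mom(1) mom(3) cm])
  have Vf: "V = Ai - B\<^sup>2" using mom(4) ED ED2 by (simp add: V_def)
  have Cf: "cov_rv M DY D = Am - (p0 * m 0 + Cm) * B" using mom(5) EY EDY Em ED EDm by simp
  have TM: "(LBINT l:{dL..dU}. LBINT h:{l..dU}. (h - l) * (m h - m l) * f h * f l) = Q * Am - B * Cm"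
    unfolding Q_def Am_def B_def Cm_def by (rule tri[OF fm _ fi, of m Gm]) (use Gm in auto)
  have TI: "(LBINT l:{dL..dU}. LBINT h:{l..dU}. (h - l) * (h - l) * f h * f l) = Q * Ai - B * B"
    unfolding Q_def Ai_def B_def by (rule tri[OF fm _ fi, of "\<lambda>x. x" Gx]) (use Gx in auto)
  have sxm: "set_integrable lborel {dL..dU} (\<lambda>x. x * m x * f x)"
    by (rule set_int_bounded[OF fi, of "\<lambda>x. x * m x" Gxm]) (use Gxm in auto)
  have sx: "set_integrable lborel {dL..dU} (\<lambda>x. x * f x)"
    by (rule set_int_bounded[OF fi, of "\<lambda>x. x" Gx]) (use Gx in auto)
  define w1 where "w1 = (\<lambda>l h. (h - l)\<^sup>2 * f h * f l / var_rv M D)"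
  define w0 where "w0 = (\<lambda>h. h\<^sup>2 * f h * p0 / var_rv M D)"
  have pw1: "\<And>l h. w1 l h * ((m h - m l) / (h - l)) = (h - l) * (m h - m l) * f h * f l / V"
    using V by (case_tac "h = l") (simp_all add: w1_def V_def power2_eq_square field_simps)
  have pw0: "\<And>h. w0 h * ((m h - m 0) / h) = (p0 * (h * m h * f h) - p0 * m 0 * (h * f h)) / V"
    using V by (case_tac "h = 0") (simp_all add: w0_def V_def power2_eq_square field_simps)
  have pw1': "\<And>l h. w1 l h = (h - l) * (h - l) * f h * f l / V"
    by (simp add: w1_def V_def power2_eq_square)
  have pw0': "\<And>h. w0 h = p0 * (h * h * f h) / V"
    by (simp add: w0_def V_def power2_eq_square mult_ac)
  have I1: "(LBINT l:{dL..dU}. LBINT h:{l..dU}. w1 l h * ((m h - m l) / (h - l))) = (Q * Am - B * Cm) / V"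
    by (simp only: pw1 set_integral_divide_zero TM)
  have I0: "(LBINT h:{dL..dU}. w0 h * ((m h - m 0) / h)) = (p0 * Am - p0 * m 0 * B) / V"
  proof -
    have "(LBINT h:{dL..dU}. p0 * (h * m h * f h) - p0 * m 0 * (h * f h)) = p0 * Am - p0 * m 0 * B"
      using sxm sx by (simp add: set_integral_diff set_integral_mult_right set_integrable_mult_right Am_def B_def)
    then show ?thesis by (simp only: pw0 set_integral_divide_zero)
  qed
  have J1: "(LBINT l:{dL..dU}. LBINT h:{l..dU}. w1 l h) = (Q * Ai - B * B) / V"
    by (simp only: pw1' set_integral_divide_zero TI)
  have J0: "(LBINT h:{dL..dU}. w0 h) = p0 * Ai / V"
    by (simp only: pw0' set_integral_divide_zero set_integral_mult_right Ai_def)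
  have c1: "beta_twfe M DY D = (LBINT l:{dL..dU}. LBINT h:{l..dU}. w1 l h * ((m h - m l) / (h - l)))
          + (LBINT h:{dL..dU}. w0 h * ((m h - m 0) / h))"
  proof -
    have "beta_twfe M DY D = (Am - (p0 * m 0 + Cm) * B) / V" unfolding beta_twfe_def Cf V_def ..
    also have "\<dots> = ((Q * Am - B * Cm) + (p0 * Am - p0 * m 0 * B)) / V"
    proof -
      have Qe: "Q = 1 - p0" using E1 by simp
      show ?thesis unfolding Qe by (simp add: algebra_simps)
    qed
    also have "\<dots> = (Q * Am - B * Cm) / V + (p0 * Am - p0 * m 0 * B) / V"
      by (rule add_divide_distrib)
    finally show ?thesis using I1 I0 by simp
  qed
  have c4: "(LBINT l:{dL..dU}. LBINT h:{l..dU}. w1 l h) + (LBINT h:{dL..dU}. w0 h) = 1"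
  proof -
    have "(Q * Ai - B * B) / V + p0 * Ai / V = (Ai - B\<^sup>2) / V"
    proof -
      have Qe: "Q = 1 - p0" using E1 by simp
      show ?thesis unfolding Qe by (simp add: algebra_simps power2_eq_square add_divide_distrib[symmetric] diff_divide_distrib[symmetric])
    qed
    then show ?thesis using J1 J0 Vf Vpos by simp
  qed
  have p0p: "p0 > 0" using p0pos by (simp add: p0_def)
  have c2: "\<forall>l\<in>{dL..dU}. \<forall>h\<in>{l..dU}. w1 l h \<ge> 0"
  proof (intro ballI)
    fix l h assume lh: "l \<in> {dL..dU}" "h \<in> {l..dU}"
    then have "f h > 0" "f l > 0" using fpos by auto
    then have "0 \<le> (h - l)\<^sup>2 * f h * f l" by simp
    then show "w1 l h \<ge> 0" unfolding w1_def using V by (rule divide_nonneg_pos)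
  qed
  have c3: "\<forall>h\<in>{dL..dU}. w0 h \<ge> 0"
  proof (intro ballI)
    fix h assume lh: "h \<in> {dL..dU}"
    then have "f h > 0" using fpos by auto
    then have "0 \<le> h\<^sup>2 * f h * p0" using p0p by simp
    then show "w0 h \<ge> 0" unfolding w0_def using V by (rule divide_nonneg_pos)
  qed
  have c5: "\<forall>l\<in>{dL..dU}. \<forall>h\<in>{dL..dU}. w1 l h =
              (h - l)\<^sup>2 * (f h + f l)\<^sup>2 * (f h / (f h + f l)) * (f l / (f h + f l)) / var_rv M D"
  proof (intro ballI)
    fix l h assume "l \<in> {dL..dU}" "h \<in> {dL..dU}"
    then have "f h + f l > 0" using fpos by (simp add: add_pos_pos)
    then have "(f h + f l)\<^sup>2 * (f h / (f h + f l)) * (f l / (f h + f l)) = f h * f l"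
      by (simp add: power2_eq_square)
    note X = this
    have "(h - l)\<^sup>2 * (f h + f l)\<^sup>2 * (f h / (f h + f l)) * (f l / (f h + f l)) / var_rv M D
        = (h - l)\<^sup>2 * ((f h + f l)\<^sup>2 * (f h / (f h + f l)) * (f l / (f h + f l))) / var_rv M D"
      by (simp only: mult.assoc)
    also have "\<dots> = (h - l)\<^sup>2 * (f h * f l) / var_rv M D" by (simp only: X)
    finally show "w1 l h = (h - l)\<^sup>2 * (f h + f l)\<^sup>2 * (f h / (f h + f l)) * (f l / (f h + f l)) / var_rv M D"
      unfolding w1_def by (simp add: mult.assoc)
  qed
  have c6: "\<forall>h\<in>{dL..dU}. w0 h = h\<^sup>2 * (f h + p0)\<^sup>2 * (f h / (f h + p0)) * (p0 / (f h + p0)) / var_rv M D"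
  proof (intro ballI)
    fix h assume "h \<in> {dL..dU}"
    then have "f h + p0 > 0" using fpos p0p by (simp add: add_pos_pos)
    then have "(f h + p0)\<^sup>2 * (f h / (f h + p0)) * (p0 / (f h + p0)) = f h * p0"
      by (simp add: power2_eq_square)
    note X = this
    have "h\<^sup>2 * (f h + p0)\<^sup>2 * (f h / (f h + p0)) * (p0 / (f h + p0)) / var_rv M D
        = h\<^sup>2 * ((f h + p0)\<^sup>2 * (f h / (f h + p0)) * (p0 / (f h + p0))) / var_rv M D"
      by (simp only: mult.assoc)
    also have "\<dots> = h\<^sup>2 * (f h * p0) / var_rv M D" by (simp only: X)
    finally show "w0 h = h\<^sup>2 * (f h + p0)\<^sup>2 * (f h / (f h + p0)) * (p0 / (f h + p0)) / var_rv M D"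
      unfolding w0_def by (simp add: mult.assoc)
  qed
  have G: "beta_twfe M DY D =
            (LBINT l:{dL..dU}. LBINT h:{l..dU}. w1 l h * ((m h - m l) / (h - l)))
          + (LBINT h:{dL..dU}. w0 h * ((m h - m 0) / h))
        \<and> (\<forall>l\<in>{dL..dU}. \<forall>h\<in>{l..dU}. w1 l h \<ge> 0)
        \<and> (\<forall>h\<in>{dL..dU}. w0 h \<ge> 0)
        \<and> (LBINT l:{dL..dU}. LBINT h:{l..dU}. w1 l h) + (LBINT h:{dL..dU}. w0 h) = 1
        \<and> (\<forall>l\<in>{dL..dU}. \<forall>h\<in>{dL..dU}. w1 l h =
              (h - l)\<^sup>2 * (f h + f l)\<^sup>2 * (f h / (f h + f l)) * (f l / (f h + f l)) / var_rv M D)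
        \<and> (\<forall>h\<in>{dL..dU}. w0 h =
              h\<^sup>2 * (f h + p0)\<^sup>2 * (f h / (f h + p0)) * (p0 / (f h + p0)) / var_rv M D)"
    using c1 c2 c3 c4 c5 c6 by blast
  show ?thesis using G unfolding Let_def w1_def w0_def p0_def .
qed


theorem proposition8:
  fixes M :: "'a measure" and DY D :: "'a \<Rightarrow> real" and m :: "real \<Rightarrow> real"
  assumes "prob_space M"
    and "DY \<in> borel_measurable M" and "D \<in> borel_measurable M"
    and "integrable M (\<lambda>x. (DY x)\<^sup>2)" and "integrable M (\<lambda>x. (D x)\<^sup>2)"
    and "AE x in M. D x \<ge> 0"
    and "var_rv M D > 0"
    and "is_cond_mean M DY D m"
  shows
  "(\<forall>dL dU (f :: real \<Rightarrow> real).
      (0 < dL \<and> dL < dU \<and> \<P>(x in M. D x = 0) > 0 \<and>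
       f \<in> borel_measurable borel \<and> set_integrable lborel {dL..dU} f \<and>
       (\<forall>x\<in>{dL..dU}. f x > 0) \<and>
       (\<forall>A \<in> sets borel. \<P>(x in M. D x \<in> A) =
           \<P>(x in M. D x = 0) * indicator A 0 + (LBINT x:(A \<inter> {dL..dU}). f x)) \<and>
       (\<exists>m'. continuous_on {dL..dU} m' \<and>
          (\<forall>x\<in>{dL..dU}. (m has_real_derivative m' x) (at x within {dL..dU}))))
    \<longrightarrow>
      (let p0 = \<P>(x in M. D x = 0);
           w1 = (\<lambda>l h. (h - l)\<^sup>2 * f h * f l / var_rv M D);
           w0 = (\<lambda>h. h\<^sup>2 * f h * p0 / var_rv M D)
       in beta_twfe M DY D =
            (LBINT l:{dL..dU}. LBINT h:{l..dU}. w1 l h * ((m h - m l) / (h - l)))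
          + (LBINT h:{dL..dU}. w0 h * ((m h - m 0) / h))
        \<and> (\<forall>l\<in>{dL..dU}. \<forall>h\<in>{l..dU}. w1 l h \<ge> 0)
        \<and> (\<forall>h\<in>{dL..dU}. w0 h \<ge> 0)
        \<and> (LBINT l:{dL..dU}. LBINT h:{l..dU}. w1 l h) + (LBINT h:{dL..dU}. w0 h) = 1
        \<and> (\<forall>l\<in>{dL..dU}. \<forall>h\<in>{dL..dU}. w1 l h =
              (h - l)\<^sup>2 * (f h + f l)\<^sup>2 * (f h / (f h + f l)) * (f l / (f h + f l)) / var_rv M D)
        \<and> (\<forall>h\<in>{dL..dU}. w0 h =
              h\<^sup>2 * (f h + p0)\<^sup>2 * (f h / (f h + p0)) * (p0 / (f h + p0)) / var_rv M D)))
  \<and>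
   (\<forall>S :: real set.
      (finite S \<and> 0 \<in> S \<and> (\<forall>d\<in>S. d \<ge> 0) \<and>
       (\<forall>d\<in>S. \<P>(x in M. D x = d) > 0) \<and> \<P>(x in M. D x \<in> S) = 1)
    \<longrightarrow>
      (let p = (\<lambda>d. \<P>(x in M. D x = d));
           w = (\<lambda>l h. (h - l)\<^sup>2 * (p l + p h)\<^sup>2 *
                  \<P>(x in M. D x = l \<bar> D x \<in> {l, h}) * (1 - \<P>(x in M. D x = l \<bar> D x \<in> {l, h}))
                  / var_rv M D)
       in beta_twfe M DY D =
            (\<Sum>l\<in>S. \<Sum>h\<in>{h\<in>S. h > l}. w l h * ((m h - m l) / (h - l)))
        \<and> (\<forall>l\<in>S. \<forall>h\<in>{h\<in>S. h > l}. w l h = (h - l)\<^sup>2 * p l * p h / var_rv M D)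
        \<and> (\<forall>l\<in>S. \<forall>h\<in>{h\<in>S. h > l}. w l h \<ge> 0)
        \<and> (\<Sum>l\<in>S. \<Sum>h\<in>{h\<in>S. h > l}. w l h) = 1))"
    apply (rule conjI)
   apply (intro allI impI)
   apply (rule part1[OF assms(1,2,3,4,5,7,8)])
   apply assumption
  apply (intro allI impI)
  apply (rule part2[OF assms(1,2,3,4,5,7,8)])
    apply blast+
  done

end
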